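(* Let $\mathcal{X}$ be a set, $\mathcal{D}$ a distribution on $\mathcal{X}\times[0,1]^N$, $f,f^\star:\mathcal{X}\to[0,1]^N$ two functions, $q:\mathcal{X}\times[0,1]^N\to\Delta(\mathcal{S})$ a stochastic policy and $\pi:\mathcal{X}\times[0,1]^N\to\mathcal{S}$ a deterministic policy. Then $$\Big|\mathbb{E}_{(x,r)\sim\mathcal{D}}\big[R(\pi(x,r),f(x),r)\big]-\mathbb{E}_{(x,r)\sim\mathcal{D}}\big[R(\pi(x,r),f^\star(x),r)\big]\Big|\le\sqrt{V(q,\pi)}\cdot\sqrt{\mathbb{E}_{(x,r)\sim\mathcal{D},\,S\sim q(x,r)}\Big[\sum_{i\in S}(f_i(x)-f_i^\star(x))^2\Big]}.$$
   Context: $N\ge K\ge1$ are integers and $\mathcal{S}$ is the collection of subsets $S\subseteq[N]$ with $1\le|S|\le K$; $\Delta(\mathcal{S})$ is the set of probability distributions on $\mathcal{S}$. For $S\in\mathcal{S}$, $v\in[0,1]^N$, $r\in[0,1]^N$, $R(S,v,r)=\frac{\sum_{i\in S}r_iv_i}{1+\sum_{i\in S}v_i}$. For $\rho\in\Delta(\mathcal{S})$, $w_i(\rho)=\sum_{S\in\mathcal{S}:\,i\in S}\rho(S)$. The dispersion is $V(q,\pi)=\mathbb{E}_{(x,r)\sim\mathcal{D}}\big[\sum_{i\in\pi(x,r)}\frac{1}{w_i(q(x,r))}\big]$ (with $1/0=+\infty$). *)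

theory Defs
  imports "HOL-Probability.Probability"
begin

text \<open>Items are indexed by [N] = {1..N}; utility/revenue vectors are functions nat => real
  (only the coordinates in {1..N} matter).\<close>

definition assortments :: "nat \<Rightarrow> nat \<Rightarrow> nat set set" where
  "assortments N K = {S. S \<subseteq> {1..N} \<and> 1 \<le> card S \<and> card S \<le> K}"

definition revenue :: "nat set \<Rightarrow> (nat \<Rightarrow> real) \<Rightarrow> (nat \<Rightarrow> real) \<Rightarrow> real" where
  "revenue S v r = (\<Sum>i\<in>S. r i * v i) / (1 + (\<Sum>i\<in>S. v i))"

definition weight :: "nat set pmf \<Rightarrow> nat \<Rightarrow> real" where
  "weight \<rho> i = measure_pmf.prob \<rho> {S. i \<in> S}"

definition inv_weight :: "nat set pmf \<Rightarrow> nat \<Rightarrow> ennreal" where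
  "inv_weight \<rho> i = (if weight \<rho> i = 0 then \<infinity> else ennreal (1 / weight \<rho> i))"

definition dispersion ::
  "('x \<times> (nat \<Rightarrow> real)) measure \<Rightarrow> ('x \<times> (nat \<Rightarrow> real) \<Rightarrow> nat set pmf)
     \<Rightarrow> ('x \<times> (nat \<Rightarrow> real) \<Rightarrow> nat set) \<Rightarrow> ennreal" where
  "dispersion D q \<pi> = (\<integral>\<^sup>+ xr. (\<Sum>i\<in>\<pi> xr. inv_weight (q xr) i) \<partial>D)"

end

theory Submission
  imports Defs
begin


lemma meas_choice:
  assumes "finite A" "\<pi> \<in> M \<rightarrow>\<^sub>M count_space UNIV" "\<And>x. \<pi> x \<in> A"
    "\<And>S. S \<in> A \<Longrightarrow> (\<lambda>x. h S x) \<in> measurable M N"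
  shows "(\<lambda>x. h (\<pi> x) x) \<in> measurable M N"
proof (rule measurable_compose_countable'[where I=A])
  show "\<pi> \<in> M \<rightarrow>\<^sub>M count_space A"
    unfolding measurable_count_space_eq2[OF assms(1)]
  proof
    show "\<pi> \<in> space M \<rightarrow> A" using assms(3) by auto
    show "\<forall>a\<in>A. \<pi> -` {a} \<inter> space M \<in> sets M"
      using assms(2) by (auto simp: measurable_def)
  qed
qed (use assms in \<open>auto intro: countable_finite\<close>)

lemma finite_assort: "finite (assortments N K)"
  by (rule finite_subset[of _ "Pow {1..N}"]) (auto simp: assortments_def)

lemma assort_sub: "S \<in> assortments N K \<Longrightarrow> S \<subseteq> {1..N}"
  by (auto simp: assortments_def)

lemma assort_fin: "S \<in> assortments N K \<Longrightarrow> finite S"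
  using assort_sub[of S N K] finite_subset[of S "{1..N}"] by simp

lemma rev_bounds:
  assumes "finite S" "\<forall>i\<in>S. r i \<in> {0..1}" "\<forall>i\<in>S. v i \<in> {0..1}"
  shows "0 \<le> revenue S v r" "revenue S v r \<le> 1"
proof -
  have A: "(\<Sum>i\<in>S. r i * v i) \<le> (\<Sum>i\<in>S. v i)"
    by (rule sum_mono) (use assms in \<open>auto intro: mult_left_le_one_le\<close>)
  have A0: "0 \<le> (\<Sum>i\<in>S. r i * v i)" by (rule sum_nonneg) (use assms in auto)
  have B: "0 \<le> (\<Sum>i\<in>S. v i)" by (rule sum_nonneg) (use assms in auto)
  show "0 \<le> revenue S v r" unfolding revenue_def using A0 B by simp
  show "revenue S v r \<le> 1" unfolding revenue_def using A B by (simp add: divide_le_eq)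
qed

lemma rev_lip:
  assumes "finite S" "\<forall>i\<in>S. r i \<in> {0..1}" "\<forall>i\<in>S. v i \<in> {0..1}" "\<forall>i\<in>S. v' i \<in> {0..1}"
  shows "\<bar>revenue S v r - revenue S v' r\<bar> \<le> (\<Sum>i\<in>S. \<bar>v i - v' i\<bar>)"
proof -
  define R where "R = revenue S v r"
  define B where "B = (\<Sum>i\<in>S. v i)"
  define B' where "B' = (\<Sum>i\<in>S. v' i)"
  define A where "A = (\<Sum>i\<in>S. r i * v i)"
  define A' where "A' = (\<Sum>i\<in>S. r i * v' i)"
  have R01: "0 \<le> R" "R \<le> 1" using rev_bounds[OF assms(1-3)] by (auto simp: R_def)
  have B0: "0 \<le> B" unfolding B_def by (rule sum_nonneg) (use assms in auto)
  have B'0: "0 \<le> B'" unfolding B'_def by (rule sum_nonneg) (use assms in auto)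
  have RA: "R * (1 + B) = A" using B0 by (simp add: R_def revenue_def A_def B_def)
  have R': "revenue S v' r = A' / (1 + B')" by (simp add: revenue_def A'_def B'_def)
  have e: "(v i - v' i) * (r i - R) = r i * v i - R * v i + R * v' i - r i * v' i" for i
    by (simp add: algebra_simps)
  have key: "R * (1 + B') - A' = (\<Sum>i\<in>S. (v i - v' i) * (r i - R))"
  proof -
    have "(\<Sum>i\<in>S. (v i - v' i) * (r i - R))
        = (\<Sum>i\<in>S. r i * v i) - (\<Sum>i\<in>S. R * v i) + (\<Sum>i\<in>S. R * v' i) - (\<Sum>i\<in>S. r i * v' i)"
      by (simp only: e sum.distrib sum_subtractf)
    also have "\<dots> = A - R * B + R * B' - A'"
      by (simp only: A_def A'_def B_def B'_def sum_distrib_left)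
    also have "\<dots> = R * (1 + B') - A'" using RA by (simp add: algebra_simps)
    finally show ?thesis by simp
  qed
  have "\<bar>\<Sum>i\<in>S. (v i - v' i) * (r i - R)\<bar> \<le> (\<Sum>i\<in>S. \<bar>(v i - v' i) * (r i - R)\<bar>)"
    by (rule sum_abs)
  also have "\<dots> \<le> (\<Sum>i\<in>S. \<bar>v i - v' i\<bar>)"
  proof (rule sum_mono)
    fix i assume "i \<in> S"
    then have "\<bar>r i - R\<bar> \<le> 1" using assms(2) R01 by auto
    then show "\<bar>(v i - v' i) * (r i - R)\<bar> \<le> \<bar>v i - v' i\<bar>"
      by (simp add: abs_mult mult_left_le)
  qed
  finally have K: "\<bar>R * (1 + B') - A'\<bar> \<le> (\<Sum>i\<in>S. \<bar>v i - v' i\<bar>)" using key by simp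
  have pos: "0 < 1 + B'" using B'0 by simp
  have "R - A' / (1 + B') = (R * (1 + B') - A') / (1 + B')"
    using pos by (simp add: diff_divide_distrib)
  then have "\<bar>R - A' / (1 + B')\<bar> = \<bar>R * (1 + B') - A'\<bar> / (1 + B')" using pos by simp
  also have "\<dots> \<le> \<bar>R * (1 + B') - A'\<bar>"
  proof -
    have "\<bar>R * (1 + B') - A'\<bar> * 1 \<le> \<bar>R * (1 + B') - A'\<bar> * (1 + B')"
      by (rule mult_left_mono) (use B'0 in auto)
    then show ?thesis using pos by (simp add: divide_le_eq)
  qed
  finally show ?thesis using K R' R_def by simp
qed



lemma expect_sum:
  fixes g :: "nat set \<Rightarrow> real"
  assumes "set_pmf p \<subseteq> A" "finite A"
  shows "measure_pmf.expectation p g = (\<Sum>S\<in>A. pmf p S * g S)"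
  by (subst integral_measure_pmf[OF assms(2)]) (use assms in auto)

lemma weight_sum:
  assumes "set_pmf p \<subseteq> A" "finite A"
  shows "weight p i = (\<Sum>S\<in>A. pmf p S * of_bool (i \<in> S))"
proof -
  have "weight p i = measure_pmf.expectation p (indicator {S. i \<in> S})"
    by (simp add: weight_def)
  also have "\<dots> = (\<Sum>S\<in>A. pmf p S * indicator {S. i \<in> S} S)"
    by (rule expect_sum[OF assms])
  finally show ?thesis by (simp add: indicator_def)
qed

lemma weight_nonneg: "0 \<le> weight p i" by (simp add: weight_def)

lemma expect_ge:
  fixes c :: "nat \<Rightarrow> real"
  assumes "set_pmf p \<subseteq> assortments N K" "P \<subseteq> {1..N}" "\<And>i. 0 \<le> c i"
  shows "(\<Sum>i\<in>P. weight p i * c i) \<le> measure_pmf.expectation p (\<lambda>S. \<Sum>i\<in>S. c i)"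
proof -
  let ?A = "assortments N K"
  have "(\<Sum>i\<in>P. weight p i * c i) \<le> (\<Sum>i\<in>{1..N}. weight p i * c i)"
    by (rule sum_mono2) (use assms weight_nonneg in \<open>auto intro: mult_nonneg_nonneg\<close>)
  also have "\<dots> = (\<Sum>i\<in>{1..N}. \<Sum>S\<in>?A. pmf p S * (if i \<in> S then c i else 0))"
  proof (rule sum.cong[OF refl])
    fix i
    have "weight p i * c i = (\<Sum>S\<in>?A. pmf p S * of_bool (i \<in> S) * c i)"
      by (simp add: weight_sum[OF assms(1) finite_assort] sum_distrib_right)
    also have "\<dots> = (\<Sum>S\<in>?A. pmf p S * (if i \<in> S then c i else 0))"
      by (rule sum.cong[OF refl]) simp
    finally show "weight p i * c i = (\<Sum>S\<in>?A. pmf p S * (if i \<in> S then c i else 0))" .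
  qed
  also have "\<dots> = (\<Sum>S\<in>?A. pmf p S * (\<Sum>i\<in>{1..N}. (if i \<in> S then c i else 0)))"
    by (subst sum.swap) (simp add: sum_distrib_left)
  also have "\<dots> = (\<Sum>S\<in>?A. pmf p S * (\<Sum>i\<in>S. c i))"
  proof (rule sum.cong[OF refl])
    fix S assume "S \<in> ?A"
    then have "{1..N} \<inter> S = S" using assort_sub by blast
    then show "pmf p S * (\<Sum>i\<in>{1..N}. (if i \<in> S then c i else 0)) = pmf p S * (\<Sum>i\<in>S. c i)"
      using sum.inter_restrict[of "{1..N}" c S] by simp
  qed
  also have "\<dots> = measure_pmf.expectation p (\<lambda>S. \<Sum>i\<in>S. c i)"
    by (rule expect_sum[symmetric, OF assms(1) finite_assort])
  finally show ?thesis .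
qed

lemma pointwise_cs:
  fixes c :: "nat \<Rightarrow> real"
  assumes "finite P" "\<And>i. i \<in> P \<Longrightarrow> 0 < w i"
  shows "(\<Sum>i\<in>P. \<bar>c i\<bar>) \<le> sqrt (\<Sum>i\<in>P. 1 / w i) * sqrt (\<Sum>i\<in>P. w i * (c i)\<^sup>2)"
proof -
  have "(\<Sum>i\<in>P. \<bar>c i\<bar>) = (\<Sum>i\<in>P. (1 / sqrt (w i)) * (sqrt (w i) * \<bar>c i\<bar>))"
  proof (rule sum.cong[OF refl])
    fix i assume "i \<in> P"
    then have "sqrt (w i) > 0" using assms by simp
    then show "\<bar>c i\<bar> = (1 / sqrt (w i)) * (sqrt (w i) * \<bar>c i\<bar>)" by simp
  qed
  also have "\<dots> \<le> sqrt ((\<Sum>i\<in>P. (1 / sqrt (w i))^2) * (\<Sum>i\<in>P. (sqrt (w i) * \<bar>c i\<bar>)^2))"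
    by (rule real_le_rsqrt, rule Cauchy_Schwarz_ineq_sum)
  also have "(\<Sum>i\<in>P. (1 / sqrt (w i))^2) = (\<Sum>i\<in>P. 1 / w i)"
    by (rule sum.cong) (use assms in \<open>auto simp: power_divide less_imp_le\<close>)
  also have "(\<Sum>i\<in>P. (sqrt (w i) * \<bar>c i\<bar>)^2) = (\<Sum>i\<in>P. w i * (c i)\<^sup>2)"
    by (rule sum.cong) (use assms in \<open>auto simp: power_mult_distrib less_imp_le\<close>)
  finally show ?thesis by (simp add: real_sqrt_mult)
qed



theorem lemma2:
  fixes N K :: nat
    and D :: "('x \<times> (nat \<Rightarrow> real)) measure"
    and f fstar :: "'x \<Rightarrow> nat \<Rightarrow> real"
    and q :: "'x \<times> (nat \<Rightarrow> real) \<Rightarrow> nat set pmf"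
    and \<pi> :: "'x \<times> (nat \<Rightarrow> real) \<Rightarrow> nat set"
  assumes "1 \<le> K" and "K \<le> N"
    and "prob_space D"
    and "\<forall>xr\<in>space D. \<forall>i\<in>{1..N}. snd xr i \<in> {0..1}"
    and "\<forall>x. \<forall>i\<in>{1..N}. f x i \<in> {0..1}"
    and "\<forall>x. \<forall>i\<in>{1..N}. fstar x i \<in> {0..1}"
    and "\<forall>xr. set_pmf (q xr) \<subseteq> assortments N K"
    and "\<forall>xr. \<pi> xr \<in> assortments N K"
    and "\<forall>i\<in>{1..N}. (\<lambda>xr. snd xr i) \<in> borel_measurable D"
    and "\<forall>i\<in>{1..N}. (\<lambda>xr. f (fst xr) i) \<in> borel_measurable D"
    and "\<forall>i\<in>{1..N}. (\<lambda>xr. fstar (fst xr) i) \<in> borel_measurable D"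
    and "\<forall>S. (\<lambda>xr. pmf (q xr) S) \<in> borel_measurable D"
    and "\<pi> \<in> measurable D (count_space UNIV)"
  shows "dispersion D q \<pi> = \<infinity> \<or>
    \<bar>(\<integral>xr. revenue (\<pi> xr) (f (fst xr)) (snd xr) \<partial>D)
      - (\<integral>xr. revenue (\<pi> xr) (fstar (fst xr)) (snd xr) \<partial>D)\<bar>
    \<le> sqrt (enn2real (dispersion D q \<pi>)) *
       sqrt (\<integral>xr. measure_pmf.expectation (q xr)
               (\<lambda>S. \<Sum>i\<in>S. (f (fst xr) i - fstar (fst xr) i)\<^sup>2) \<partial>D)"
proof (cases "dispersion D q \<pi> = \<infinity>")
  case True then show ?thesis by simp
next
  case Vfin: False
  interpret prob_space D by fact
  let ?A = "assortments N K"
  note As = assms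
  have mr: "\<And>i. i \<in> {1..N} \<Longrightarrow> (\<lambda>xr. snd xr i) \<in> borel_measurable D" using As(9) by blast
  have mf: "\<And>i. i \<in> {1..N} \<Longrightarrow> (\<lambda>xr. f (fst xr) i) \<in> borel_measurable D" using As(10) by blast
  have ms: "\<And>i. i \<in> {1..N} \<Longrightarrow> (\<lambda>xr. fstar (fst xr) i) \<in> borel_measurable D" using As(11) by blast
  have mp: "\<And>S. (\<lambda>xr. pmf (q xr) S) \<in> borel_measurable D" using As(12) by blast
  define Rf where "Rf xr = revenue (\<pi> xr) (f (fst xr)) (snd xr)" for xr
  define Rs where "Rs xr = revenue (\<pi> xr) (fstar (fst xr)) (snd xr)" for xr
  define d where "d xr = (\<Sum>i\<in>\<pi> xr. \<bar>f (fst xr) i - fstar (fst xr) i\<bar>)" for xr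
  define a where "a xr = (\<Sum>i\<in>\<pi> xr. inv_weight (q xr) i)" for xr
  define g where "g (xr::'x \<times> (nat \<Rightarrow> real)) (S::nat set) = (\<Sum>i\<in>S. (f (fst xr) i - fstar (fst xr) i)\<^sup>2)" for xr S
  define b where "b xr = measure_pmf.expectation (q xr) (g xr)" for xr
  have mw: "(\<lambda>xr. weight (q xr) i) \<in> borel_measurable D" for i
  proof -
    have "(\<lambda>xr. weight (q xr) i) = (\<lambda>xr. \<Sum>S\<in>?A. pmf (q xr) S * of_bool (i \<in> S))"
      by (rule ext, rule weight_sum[OF As(7)[rule_format] finite_assort])
    also have "\<dots> \<in> borel_measurable D"
      by (intro borel_measurable_sum borel_measurable_times mp borel_measurable_const)
    finally show ?thesis .
  qed
  have mRf: "Rf \<in> borel_measurable D" unfolding Rf_def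
  proof (rule meas_choice[OF finite_assort As(13)])
    show "\<pi> x \<in> ?A" for x using As(8) by blast
    fix S assume S: "S \<in> ?A"
    then have "\<And>i. i \<in> S \<Longrightarrow> i \<in> {1..N}" using assort_sub by blast
    then show "(\<lambda>x. revenue S (f (fst x)) (snd x)) \<in> borel_measurable D"
      unfolding revenue_def
      by (intro borel_measurable_divide borel_measurable_add borel_measurable_sum
             borel_measurable_times borel_measurable_const mr mf) auto
  qed
  have mRs: "Rs \<in> borel_measurable D" unfolding Rs_def
  proof (rule meas_choice[OF finite_assort As(13)])
    show "\<pi> x \<in> ?A" for x using As(8) by blast
    fix S assume S: "S \<in> ?A"
    then have "\<And>i. i \<in> S \<Longrightarrow> i \<in> {1..N}" using assort_sub by blast
    then show "(\<lambda>x. revenue S (fstar (fst x)) (snd x)) \<in> borel_measurable D"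
      unfolding revenue_def
      by (intro borel_measurable_divide borel_measurable_add borel_measurable_sum
             borel_measurable_times borel_measurable_const mr ms) auto
  qed
  have md: "d \<in> borel_measurable D" unfolding d_def
  proof (rule meas_choice[OF finite_assort As(13)])
    show "\<pi> x \<in> ?A" for x using As(8) by blast
    fix S assume S: "S \<in> ?A"
    then have "\<And>i. i \<in> S \<Longrightarrow> i \<in> {1..N}" using assort_sub by blast
    then show "(\<lambda>x. \<Sum>i\<in>S. \<bar>f (fst x) i - fstar (fst x) i\<bar>) \<in> borel_measurable D"
      by (intro borel_measurable_sum borel_measurable_abs borel_measurable_diff mf ms) auto
  qed
  have mw0: "{x \<in> space D. weight (q x) i = 0} \<in> sets D" for i
  proof -
    have "{x \<in> space D. weight (q x) i = 0} = (\<lambda>x. weight (q x) i) -` {0} \<inter> space D" by auto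
    then show ?thesis using borel_measurable_vimage[OF mw] by simp
  qed
  have mi: "(\<lambda>x. inv_weight (q x) i) \<in> borel_measurable D" for i
    unfolding inv_weight_def
    by (rule measurable_If[OF measurable_const
          measurable_compose[OF borel_measurable_divide[OF borel_measurable_const mw] measurable_ennreal] mw0]) simp
  have ma: "a \<in> borel_measurable D" unfolding a_def
  proof (rule meas_choice[OF finite_assort As(13)])
    show "\<pi> x \<in> ?A" for x using As(8) by blast
    fix S assume S: "S \<in> ?A"
    show "(\<lambda>x. \<Sum>i\<in>S. inv_weight (q x) i) \<in> borel_measurable D"
      by (rule borel_measurable_sum) (rule mi)
  qed
  have mg: "(\<lambda>xr. g xr S) \<in> borel_measurable D" if "S \<in> ?A" for S
  proof -
    have "\<And>i. i \<in> S \<Longrightarrow> i \<in> {1..N}" using that assort_sub by blast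
    then show ?thesis unfolding g_def
      by (intro borel_measurable_sum borel_measurable_power borel_measurable_diff mf ms) auto
  qed
  have bsum: "b xr = (\<Sum>S\<in>?A. pmf (q xr) S * g xr S)" for xr
    unfolding b_def by (rule expect_sum[OF As(7)[rule_format] finite_assort])
  have mb: "b \<in> borel_measurable D"
  proof -
    have "b = (\<lambda>xr. \<Sum>S\<in>?A. pmf (q xr) S * g xr S)" by (rule ext, rule bsum)
    also have "\<dots> \<in> borel_measurable D"
      by (intro borel_measurable_sum borel_measurable_times mp mg)
    finally show ?thesis .
  qed
  have pA: "\<pi> xr \<in> ?A" for xr using As(8) by blast
  have pfin: "finite (\<pi> xr)" for xr using assort_fin[OF pA] .
  have psub: "\<pi> xr \<subseteq> {1..N}" for xr using assort_sub[OF pA] .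
  have f01: "\<And>x i. i \<in> \<pi> xr \<Longrightarrow> f x i \<in> {0..1}" for xr using As(5) psub by blast
  have s01: "\<And>x i. i \<in> \<pi> xr \<Longrightarrow> fstar x i \<in> {0..1}" for xr using As(6) psub by blast
  have r01: "\<And>i. i \<in> \<pi> xr \<Longrightarrow> snd xr i \<in> {0..1}" if "xr \<in> space D" for xr
    using As(4) psub that by blast
  have cardN: "real (card S) \<le> real N" if "S \<subseteq> {1..N}" for S
  proof -
    have "card S \<le> card {1..N}" using that by (intro card_mono) auto
    then show ?thesis by simp
  qed
  have dif1: "\<bar>f x i - fstar x i\<bar> \<le> 1" if "i \<in> {1..N}" for x i
  proof -
    have "f x i \<in> {0..1}" "fstar x i \<in> {0..1}" using As(5,6) that by blast+
    then show ?thesis by auto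
  qed
  have r01': "\<forall>i\<in>\<pi> xr. snd xr i \<in> {0..1}" if "xr \<in> space D" for xr
    using r01[OF that] by blast
  have f01': "\<forall>i\<in>\<pi> xr. f x i \<in> {0..1}" for xr x using f01 by blast
  have s01': "\<forall>i\<in>\<pi> xr. fstar x i \<in> {0..1}" for xr x using s01 by blast
  have dN: "d xr \<le> real N" for xr
  proof -
    have "d xr \<le> (\<Sum>i\<in>\<pi> xr. 1)" unfolding d_def
    proof (rule sum_mono)
      fix i assume "i \<in> \<pi> xr"
      then show "\<bar>f (fst xr) i - fstar (fst xr) i\<bar> \<le> 1" using dif1 psub by blast
    qed
    also have "\<dots> = real (card (\<pi> xr))" by simp
    also have "\<dots> \<le> real N" using cardN[OF psub] .
    finally show ?thesis .
  qed
  have d0: "0 \<le> d xr" for xr unfolding d_def by (rule sum_nonneg) simp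
  have Rfb: "norm (Rf xr) \<le> 1" if "xr \<in> space D" for xr
    using rev_bounds[OF pfin r01'[OF that] f01'] unfolding Rf_def by simp
  have Rsb: "norm (Rs xr) \<le> 1" if "xr \<in> space D" for xr
    using rev_bounds[OF pfin r01'[OF that] s01'] unfolding Rs_def by simp
  have intRf: "integrable D Rf"
    by (rule integrable_const_bound[where B=1, OF AE_I2 mRf]) (rule Rfb)
  have intRs: "integrable D Rs"
    by (rule integrable_const_bound[where B=1, OF AE_I2 mRs]) (rule Rsb)
  have intd: "integrable D d"
    by (rule integrable_const_bound[where B="real N", OF AE_I2 md]) (simp add: d0 dN)
  have g0: "0 \<le> g xr S" for xr S unfolding g_def by (rule sum_nonneg) auto
  have b0: "0 \<le> b xr" for xr unfolding bsum by (rule sum_nonneg) (use g0 in auto)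
  have bN: "b xr \<le> real N" for xr
  proof -
    have "b xr \<le> (\<Sum>S\<in>?A. pmf (q xr) S * real N)" unfolding bsum
    proof (rule sum_mono, rule mult_left_mono)
      fix S assume S: "S \<in> ?A"
      have "g xr S \<le> (\<Sum>i\<in>S. 1)" unfolding g_def
      proof (rule sum_mono)
        fix i assume "i \<in> S"
        then have "i \<in> {1..N}" using assort_sub[OF S] by blast
        then have "\<bar>f (fst xr) i - fstar (fst xr) i\<bar> \<le> 1" by (rule dif1)
        then show "(f (fst xr) i - fstar (fst xr) i)\<^sup>2 \<le> 1"
          by (simp add: abs_square_le_1)
      qed
      also have "\<dots> \<le> real N" using cardN[OF assort_sub[OF S]] by simp
      finally show "g xr S \<le> real N" .
    qed simp
    also have "\<dots> = real N" using sum_pmf_eq_1[OF finite_assort As(7)[rule_format, of xr]]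
      by (simp add: sum_distrib_right[symmetric])
    finally show ?thesis .
  qed
  have intb: "integrable D b"
    by (rule integrable_const_bound[where B="real N", OF AE_I2 mb]) (simp add: b0 bN)
  have step1: "\<bar>(\<integral>xr. Rf xr \<partial>D) - (\<integral>xr. Rs xr \<partial>D)\<bar> \<le> (\<integral>xr. d xr \<partial>D)"
  proof -
    have "(\<integral>xr. Rf xr \<partial>D) - (\<integral>xr. Rs xr \<partial>D) = (\<integral>xr. Rf xr - Rs xr \<partial>D)"
      using intRf intRs by simp
    moreover have "\<bar>\<integral>xr. Rf xr - Rs xr \<partial>D\<bar> \<le> (\<integral>xr. d xr \<partial>D)"
    proof -
      have "\<bar>\<integral>xr. Rf xr - Rs xr \<partial>D\<bar> \<le> (\<integral>xr. norm (Rf xr - Rs xr) \<partial>D)"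
        using integral_norm_bound[of D "\<lambda>xr. Rf xr - Rs xr"] by simp
      also have "\<dots> \<le> (\<integral>xr. d xr \<partial>D)"
      proof (rule integral_mono)
        show "integrable D (\<lambda>xr. norm (Rf xr - Rs xr))"
          by (rule integrable_norm[OF Bochner_Integration.integrable_diff[OF intRf intRs]])
        show "integrable D d" by (rule intd)
        fix xr assume "xr \<in> space D"
        show "norm (Rf xr - Rs xr) \<le> d xr"
          unfolding Rf_def Rs_def d_def real_norm_def
          by (rule rev_lip[OF pfin r01'[OF \<open>xr \<in> space D\<close>] f01' s01'])
      qed
      finally show ?thesis .
    qed
    ultimately show ?thesis by simp
  qed
  define V where "V = dispersion D q \<pi>"
  have Va: "V = (\<integral>\<^sup>+xr. a xr \<partial>D)" unfolding V_def dispersion_def a_def ..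
  have aefin: "AE xr in D. a xr \<noteq> \<infinity>"
    by (rule nn_integral_PInf_AE[OF ma]) (use Vfin Va V_def in simp)
  define F where "F xr = ennreal (sqrt (enn2real (a xr)))" for xr
  define G where "G xr = ennreal (sqrt (b xr))" for xr
  have mF: "F \<in> borel_measurable D"
  proof -
    have "(\<lambda>x. enn2real (a x)) \<in> borel_measurable D" by (rule borel_measurable_enn2real[OF ma])
    then have "(\<lambda>x. sqrt (enn2real (a x))) \<in> borel_measurable D"
      by (rule measurable_compose[OF _ borel_measurable_sqrt])
    then show ?thesis unfolding F_def by (rule measurable_compose[OF _ measurable_ennreal])
  qed
  have mG: "G \<in> borel_measurable D"
  proof -
    have "(\<lambda>x. sqrt (b x)) \<in> borel_measurable D"
      by (rule measurable_compose[OF mb borel_measurable_sqrt])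
    then show ?thesis unfolding G_def by (rule measurable_compose[OF _ measurable_ennreal])
  qed
  have pw: "d xr \<le> sqrt (enn2real (a xr)) * sqrt (b xr)" if "a xr \<noteq> \<infinity>" for xr
  proof -
    let ?w = "weight (q xr)"
    have wpos: "0 < ?w i" if "i \<in> \<pi> xr" for i
    proof -
      have "inv_weight (q xr) i \<noteq> \<infinity>"
        using \<open>a xr \<noteq> \<infinity>\<close> that pfin[of xr] by (auto simp: a_def top_unique)
      then have "?w i \<noteq> 0" by (auto simp: inv_weight_def)
      then show ?thesis using weight_nonneg[of "q xr" i] by simp
    qed
    have "a xr = (\<Sum>i\<in>\<pi> xr. ennreal (1 / ?w i))" unfolding a_def
    proof (rule sum.cong[OF refl])
      fix i assume "i \<in> \<pi> xr"
      then have "?w i \<noteq> 0" using wpos[of i] by simp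
      then show "inv_weight (q xr) i = ennreal (1 / ?w i)" by (simp add: inv_weight_def)
    qed
    also have "\<dots> = ennreal (\<Sum>i\<in>\<pi> xr. 1 / ?w i)" by (rule sum_ennreal) (simp add: weight_nonneg)
    finally have ae: "enn2real (a xr) = (\<Sum>i\<in>\<pi> xr. 1 / ?w i)"
      by (simp add: sum_nonneg weight_nonneg)
    have "d xr \<le> sqrt (\<Sum>i\<in>\<pi> xr. 1 / ?w i) * sqrt (\<Sum>i\<in>\<pi> xr. ?w i * (f (fst xr) i - fstar (fst xr) i)\<^sup>2)"
      unfolding d_def by (rule pointwise_cs[OF pfin wpos])
    also have "\<dots> \<le> sqrt (\<Sum>i\<in>\<pi> xr. 1 / ?w i) * sqrt (b xr)"
      unfolding b_def g_def
    proof (rule mult_left_mono)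
      show "0 \<le> sqrt (\<Sum>i\<in>\<pi> xr. 1 / ?w i)" by (simp add: sum_nonneg weight_nonneg)
      show "sqrt (\<Sum>i\<in>\<pi> xr. ?w i * (f (fst xr) i - fstar (fst xr) i)\<^sup>2)
          \<le> sqrt (measure_pmf.expectation (q xr) (\<lambda>S. \<Sum>i\<in>S. (f (fst xr) i - fstar (fst xr) i)\<^sup>2))"
        by (rule real_sqrt_le_mono, rule expect_ge[OF As(7)[rule_format] psub]) simp
    qed
    finally show ?thesis using ae by simp
  qed
  have "(\<integral>\<^sup>+xr. ennreal (d xr) \<partial>D) \<le> (\<integral>\<^sup>+xr. F xr * G xr \<partial>D)"
  proof (rule nn_integral_mono_AE)
    show "AE x in D. ennreal (d x) \<le> F x * G x"
      using aefin
    proof eventually_elim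
      case (elim x)
      have "ennreal (d x) \<le> ennreal (sqrt (enn2real (a x)) * sqrt (b x))"
        using pw[OF elim] by (rule ennreal_leI)
      also have "\<dots> = F x * G x" unfolding F_def G_def
        by (rule ennreal_mult) (simp_all add: b0)
      finally show ?case .
    qed
  qed
  then have c1: "(\<integral>\<^sup>+xr. ennreal (d xr) \<partial>D)^2 \<le> (\<integral>\<^sup>+xr. F xr * G xr \<partial>D)^2"
    by (intro power_mono) auto
  also have "\<dots> \<le> (\<integral>\<^sup>+x. F x ^ 2 \<partial>D) * (\<integral>\<^sup>+x. G x ^ 2 \<partial>D)"
    by (rule Cauchy_Schwarz_nn_integral[OF mF mG])
  also have "(\<integral>\<^sup>+x. F x ^ 2 \<partial>D) = V"
    unfolding Va
  proof (rule nn_integral_cong_AE)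
    show "AE x in D. F x ^ 2 = a x" using aefin
    proof eventually_elim
      case (elim x)
      have "F x ^ 2 = ennreal (sqrt (enn2real (a x)) ^ 2)"
        unfolding F_def by (rule ennreal_power) simp
      also have "\<dots> = ennreal (enn2real (a x))" by simp
      also have "\<dots> = a x" using elim by (simp add: less_top)
      finally show ?case .
    qed
  qed
  also have "(\<integral>\<^sup>+x. G x ^ 2 \<partial>D) = ennreal (\<integral>x. b x \<partial>D)"
  proof -
    have "(\<integral>\<^sup>+x. G x ^ 2 \<partial>D) = (\<integral>\<^sup>+x. ennreal (b x) \<partial>D)"
    proof (rule nn_integral_cong)
      fix x
      have "G x ^ 2 = ennreal (sqrt (b x) ^ 2)"
        unfolding G_def by (rule ennreal_power) (simp add: b0)
      also have "\<dots> = ennreal (b x)" using b0[of x] by simp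
      finally show "G x ^ 2 = ennreal (b x)" .
    qed
    also have "\<dots> = ennreal (\<integral>x. b x \<partial>D)"
      by (rule nn_integral_eq_integral[OF intb]) (use b0 in auto)
    finally show ?thesis .
  qed
  also have "(\<integral>\<^sup>+xr. ennreal (d xr) \<partial>D) = ennreal (\<integral>x. d x \<partial>D)"
    by (rule nn_integral_eq_integral[OF intd]) (use d0 in auto)
  finally have c2: "ennreal (\<integral>x. d x \<partial>D) ^ 2 \<le> V * ennreal (\<integral>x. b x \<partial>D)" .
  have Vr: "V = ennreal (enn2real V)" using Vfin V_def by (simp add: less_top)
  have ib0: "0 \<le> (\<integral>x. b x \<partial>D)" by (rule integral_nonneg_AE) (use b0 in auto)
  have id0: "0 \<le> (\<integral>x. d x \<partial>D)" by (rule integral_nonneg_AE) (use d0 in auto)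
  have "ennreal ((\<integral>x. d x \<partial>D) ^ 2) = ennreal (\<integral>x. d x \<partial>D) ^ 2"
    by (rule ennreal_power[symmetric]) (rule id0)
  also note c2
  also have "V * ennreal (\<integral>x. b x \<partial>D) = ennreal (enn2real V) * ennreal (\<integral>x. b x \<partial>D)"
    by (simp only: Vr[symmetric])
  also have "\<dots> = ennreal (enn2real V * (\<integral>x. b x \<partial>D))"
    by (rule ennreal_mult[symmetric]) (simp_all add: ib0)
  finally have c3: "ennreal ((\<integral>x. d x \<partial>D) ^ 2) \<le> ennreal (enn2real V * (\<integral>x. b x \<partial>D))" .
  have "(\<integral>x. d x \<partial>D) ^ 2 \<le> enn2real V * (\<integral>x. b x \<partial>D)"
  proof -
    have "0 \<le> enn2real V * (\<integral>x. b x \<partial>D)" using ib0 by simp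
    then show ?thesis using c3 by simp
  qed
  then have "(\<integral>x. d x \<partial>D) \<le> sqrt (enn2real V * (\<integral>x. b x \<partial>D))"
    by (rule real_le_rsqrt)
  then have step2: "(\<integral>x. d x \<partial>D) \<le> sqrt (enn2real V) * sqrt (\<integral>x. b x \<partial>D)"
    by (simp add: real_sqrt_mult)
  show ?thesis
    using step1 step2 unfolding Rf_def Rs_def V_def b_def g_def by simp
qed

end
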